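(* Let $\mathcal M$ be the set of all episodic MDPs with rewards bounded in $[-R_{\max},R_{\max}]$ satisfying $\sum_{t=0}^\infty\Pr(S_t\neq s_\infty)<\infty$ for every policy $\pi$. Then for every $\gamma<1$ there is no objective $J_?$ (assigning to each MDP $M\in\mathcal M$ and differentiable parameterized policy $\pi^\theta$ a real-valued function of $\theta$) such that for all $M\in\mathcal M$, $$\nabla J_?(\theta)=\mathbb E\left[\sum_{t=0}^{\infty}\psi^\theta(S_t,A_t)\,Q^\theta_\gamma(S_t,A_t)\,\middle|\,\theta\right].$$
   Context: An MDP is a tuple $(\mathcal S,\mathcal A,P,R,d_0,\gamma)$ with discrete state set $\mathcal S$, discrete action set $\mathcal A$, transition function $P:\mathcal S\times\mathcal A\times\mathcal S\to[0,1]$, expected reward function $R:\mathcal S\times\mathcal A\to[-R_{\max},R_{\max}]$, initial state distribution $d_0$, and discount factor $\gamma\in[0,1]$. At each time $t=0,1,2,\dots$ the agent observes $S_t$ (with $S_0\sim d_0$), takes $A_t\sim\pi^\theta(S_t,\cdot)$, transitions to $S_{t+1}\sim P(S_t,A_t,\cdot)$, and receives reward $R_t$ with expectation $R(S_t,A_t)$. Episodic: there is a terminal absorbing state $s_\infty$ which, once entered, is never left and yields reward $0$ forever. A parameterized policy $\pi^\theta:\mathcal S\times\mathcal A\to[0,1]$ gives action probabilities as a function of a parameter vector $\theta$; conditioning on $\theta$ means actions are drawn from $\pi^\theta$. Compatible features: $\psi^\theta(s,a):=\frac{\partial}{\partial\theta}\ln\pi^\theta(s,a)$. Action-value function: $Q^\theta_\gamma(s,a):=\mathbb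 E[\sum_{k=0}^\infty\gamma^kR_{t+k}\mid S_t=s,A_t=a,\theta]$. Here $\nabla$ denotes the gradient with respect to $\theta$. *)

theory Defs
  imports "HOL-Analysis.Analysis" "HOL-Probability.Probability"
begin

text \<open>Episodic MDPs with discrete (countable) state and action sets, realised as
  subsets of nat.  Tr s a is the next-state distribution P(s,a,.), Rw s a the expected
  reward R(s,a), D0 the initial state distribution, Term the terminal absorbing state
  s_infinity, Disc the discount factor gamma.\<close>

record mdp =
  St   :: "nat set"
  Ac   :: "nat set"
  Tr   :: "nat \<Rightarrow> nat \<Rightarrow> nat pmf"
  Rw   :: "nat \<Rightarrow> nat \<Rightarrow> real"
  D0   :: "nat pmf"
  Term :: nat
  Disc :: real

definition is_policy :: "mdp \<Rightarrow> (nat \<Rightarrow> nat pmf) \<Rightarrow> bool" where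
  "is_policy M \<pi> \<longleftrightarrow> (\<forall>s\<in>St M. set_pmf (\<pi> s) \<subseteq> Ac M)"

definition sa_step :: "mdp \<Rightarrow> (nat \<Rightarrow> nat pmf) \<Rightarrow> nat \<times> nat \<Rightarrow> (nat \<times> nat) pmf" where
  "sa_step M \<pi> x = bind_pmf (Tr M (fst x) (snd x)) (\<lambda>s'. map_pmf (\<lambda>a'. (s', a')) (\<pi> s'))"

primrec sa_from :: "mdp \<Rightarrow> (nat \<Rightarrow> nat pmf) \<Rightarrow> (nat \<times> nat) pmf \<Rightarrow> nat \<Rightarrow> (nat \<times> nat) pmf" where
  "sa_from M \<pi> d 0 = d"
| "sa_from M \<pi> d (Suc t) = bind_pmf (sa_from M \<pi> d t) (sa_step M \<pi>)"

definition sa_dist :: "mdp \<Rightarrow> (nat \<Rightarrow> nat pmf) \<Rightarrow> nat \<Rightarrow> (nat \<times> nat) pmf" where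
  "sa_dist M \<pi> t = sa_from M \<pi> (bind_pmf (D0 M) (\<lambda>s. map_pmf (\<lambda>a. (s, a)) (\<pi> s))) t"

definition prob_nonterm :: "mdp \<Rightarrow> (nat \<Rightarrow> nat pmf) \<Rightarrow> nat \<Rightarrow> real" where
  "prob_nonterm M \<pi> t = measure_pmf.prob (sa_dist M \<pi> t) {x. fst x \<noteq> Term M}"

definition episodic_mdp :: "real \<Rightarrow> real \<Rightarrow> mdp \<Rightarrow> bool" where
  "episodic_mdp Rmax \<gamma> M \<longleftrightarrow>
     Disc M = \<gamma> \<and>
     Ac M \<noteq> {} \<and>
     Term M \<in> St M \<and>
     set_pmf (D0 M) \<subseteq> St M \<and>
     (\<forall>s\<in>St M. \<forall>a\<in>Ac M. set_pmf (Tr M s a) \<subseteq> St M) \<and>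
     (\<forall>s\<in>St M. \<forall>a\<in>Ac M. \<bar>Rw M s a\<bar> \<le> Rmax) \<and>
     (\<forall>a\<in>Ac M. Tr M (Term M) a = return_pmf (Term M)) \<and>
     (\<forall>a\<in>Ac M. Rw M (Term M) a = 0)"

definition mdp_class :: "real \<Rightarrow> real \<Rightarrow> mdp set" where
  "mdp_class Rmax \<gamma> = {M. episodic_mdp Rmax \<gamma> M \<and>
      (\<forall>\<pi>. is_policy M \<pi> \<longrightarrow> summable (prob_nonterm M \<pi>))}"

definition Qfun :: "mdp \<Rightarrow> (nat \<Rightarrow> nat pmf) \<Rightarrow> nat \<Rightarrow> nat \<Rightarrow> real" where
  "Qfun M \<pi> s a = (\<Sum>k. Disc M ^ k *
      measure_pmf.expectation (sa_from M \<pi> (return_pmf (s, a)) k) (\<lambda>x. Rw M (fst x) (snd x)))"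

definition diff_policy :: "mdp \<Rightarrow> ('p::euclidean_space \<Rightarrow> nat \<Rightarrow> nat pmf) \<Rightarrow> bool" where
  "diff_policy M pol \<longleftrightarrow> (\<forall>\<theta>. is_policy M (pol \<theta>)) \<and>
     (\<forall>s a \<theta>. (\<lambda>\<theta>'. pmf (pol \<theta>' s) a) differentiable (at \<theta>))"

definition psi :: "('p::euclidean_space \<Rightarrow> nat \<Rightarrow> nat pmf) \<Rightarrow> 'p \<Rightarrow> nat \<Rightarrow> nat \<Rightarrow> 'p" where
  "psi pol \<theta> s a = (SOME g. GDERIV (\<lambda>\<theta>'. ln (pmf (pol \<theta>' s) a)) \<theta> :> g)"

definition pg_term :: "mdp \<Rightarrow> ('p::euclidean_space \<Rightarrow> nat \<Rightarrow> nat pmf) \<Rightarrow> 'p \<Rightarrow> nat \<Rightarrow> 'p" where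
  "pg_term M pol \<theta> t = measure_pmf.expectation (sa_dist M (pol \<theta>) t)
      (\<lambda>x. Qfun M (pol \<theta>) (fst x) (snd x) *\<^sub>R psi pol \<theta> (fst x) (snd x))"

definition pg_defined :: "mdp \<Rightarrow> ('p::euclidean_space \<Rightarrow> nat \<Rightarrow> nat pmf) \<Rightarrow> 'p \<Rightarrow> bool" where
  "pg_defined M pol \<theta> \<longleftrightarrow>
     (\<forall>t. integrable (measure_pmf (sa_dist M (pol \<theta>) t))
            (\<lambda>x. Qfun M (pol \<theta>) (fst x) (snd x) *\<^sub>R psi pol \<theta> (fst x) (snd x))) \<and>
     summable (pg_term M pol \<theta>)"

definition pg :: "mdp \<Rightarrow> ('p::euclidean_space \<Rightarrow> nat \<Rightarrow> nat pmf) \<Rightarrow> 'p \<Rightarrow> 'p" where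
  "pg M pol \<theta> = (\<Sum>t. pg_term M pol \<theta> t)"

end

theory Submission
  imports Defs
begin

definition sig :: "real \<Rightarrow> real" where "sig x = 1 / (1 + exp (- x))"

lemma sig_pos: "0 < sig x" unfolding sig_def by (simp add: add_pos_pos)
lemma sig_lt1: "sig x < 1" unfolding sig_def by (simp add: add_pos_pos)

lemma sig_deriv: "DERIV sig x :> sig x * (1 - sig x)"
proof -
  have "DERIV (\<lambda>x. 1 / (1 + exp (- x))) x :> (exp (-x)) / (1 + exp (-x))^2"
    apply (rule derivative_eq_intros refl)+
    using add_pos_pos[OF zero_less_one exp_gt_zero[of "-x"]] by (auto simp: power2_eq_square)
  moreover have "exp (-x) / (1 + exp (-x))^2 = sig x * (1 - sig x)"
  proof -
    have h: "1 + exp (-x) \<noteq> 0" using add_pos_pos[OF zero_less_one exp_gt_zero[of "-x"]] by simp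
    show ?thesis unfolding sig_def using h by (simp add: field_simps power2_eq_square)
  qed
  ultimately show ?thesis unfolding sig_def[abs_def] by simp
qed

lemma ln_sig_deriv: "DERIV (\<lambda>x. ln (sig x)) x :> 1 - sig x"
proof -
  have "DERIV (\<lambda>x. ln (sig x)) x :> 1 / sig x * (sig x * (1 - sig x))"
    by (rule DERIV_chain2[OF DERIV_ln_divide[OF sig_pos] sig_deriv])
  then show ?thesis using sig_pos[of x] by simp
qed

lemma ln_1sig_deriv: "DERIV (\<lambda>x. ln (1 - sig x)) x :> - sig x"
proof -
  have d: "DERIV (\<lambda>x. 1 - sig x) x :> - (sig x * (1 - sig x))"
    using DERIV_diff[OF DERIV_const sig_deriv] by simp
  have "DERIV (\<lambda>x. ln (1 - sig x)) x :> 1 / (1 - sig x) * (- (sig x * (1 - sig x)))"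
    by (rule DERIV_chain2[OF DERIV_ln_divide d]) (use sig_lt1[of x] in simp)
  then show ?thesis using sig_lt1[of x] by simp
qed

lemma sig0: "sig 0 = 1/2" unfolding sig_def by simp
lemma sig1: "sig 1 \<noteq> 1/2" unfolding sig_def by (simp add: field_simps)

definition bp :: "real \<Rightarrow> nat pmf" where
  "bp p = map_pmf (\<lambda>b. if b then 1 else 0) (bernoulli_pmf p)"

lemma set_bp: "set_pmf (bp p) \<subseteq> {0,1}" unfolding bp_def by auto

lemma pmf_bp: assumes "0 \<le> p" "p \<le> 1"
  shows "pmf (bp p) a = (if a = 1 then p else if a = 0 then 1 - p else 0)"
proof -
  have inj: "inj (\<lambda>b::bool. if b then 1 else (0::nat))" by (auto simp: inj_def split: if_splits)
  show ?thesis
  proof (cases "a = 1 \<or> a = 0")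
    case True
    then show ?thesis using pmf_map_inj'[OF inj, of "bernoulli_pmf p" True]
        pmf_map_inj'[OF inj, of "bernoulli_pmf p" False] assms
      unfolding bp_def by auto
  next
    case False
    then have "a \<notin> set_pmf (bp p)" using set_bp by blast
    then show ?thesis using False by (simp add: set_pmf_iff)
  qed
qed

lemma integral_bp:
  fixes f :: "nat \<Rightarrow> 'b::{banach, second_countable_topology}"
  assumes "0 \<le> p" "p \<le> 1"
  shows "measure_pmf.expectation (bp p) f = p *\<^sub>R f 1 + (1 - p) *\<^sub>R f 0"
  unfolding bp_def integral_map_pmf
  by (subst integral_measure_pmf[of UNIV]) (auto simp: UNIV_bool assms)

lemma integral_zero_supp:
  fixes f :: "'a \<Rightarrow> 'b::{banach, second_countable_topology}"
  assumes "\<And>x. x \<in> set_pmf d \<Longrightarrow> f x = 0"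
  shows "measure_pmf.expectation d f = 0"
  by (subst integral_measure_pmf[of "{}"]) (auto simp: assms)

lemma integral_bind_fin:
  fixes f :: "'b \<Rightarrow> 'c::{banach, second_countable_topology}"
  assumes fM: "finite (set_pmf M)" and fN: "\<And>x. x \<in> set_pmf M \<Longrightarrow> finite (set_pmf (N x))"
  shows "measure_pmf.expectation (bind_pmf M N) f
         = measure_pmf.expectation M (\<lambda>x. measure_pmf.expectation (N x) f)"
proof -
  define S where "S = set_pmf M"
  define A where "A = (\<Union>x\<in>S. set_pmf (N x))"
  have fA: "finite A" using fM fN unfolding A_def S_def by auto
  have "measure_pmf.expectation (bind_pmf M N) f = (\<Sum>a\<in>A. pmf (bind_pmf M N) a *\<^sub>R f a)"
    by (rule integral_measure_pmf[OF fA]) (auto simp: A_def S_def)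
  also have "\<dots> = (\<Sum>a\<in>A. (\<Sum>x\<in>S. pmf (N x) a * pmf M x) *\<^sub>R f a)"
  proof (rule sum.cong[OF refl])
    fix a assume "a \<in> A"
    have "pmf (bind_pmf M N) a = (\<Sum>x\<in>S. pmf (N x) a * pmf M x)"
      unfolding pmf_bind by (rule integral_measure_pmf_real) (auto simp: S_def fM)
    then show "pmf (bind_pmf M N) a *\<^sub>R f a = (\<Sum>x\<in>S. pmf (N x) a * pmf M x) *\<^sub>R f a" by simp
  qed
  also have "\<dots> = (\<Sum>x\<in>S. pmf M x *\<^sub>R (\<Sum>a\<in>A. pmf (N x) a *\<^sub>R f a))"
    by (simp add: scaleR_sum_left scaleR_sum_right sum.swap[of _ A S] mult.commute)
  also have "\<dots> = (\<Sum>x\<in>S. pmf M x *\<^sub>R measure_pmf.expectation (N x) f)"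
  proof (rule sum.cong[OF refl])
    fix x assume x: "x \<in> S"
    have "measure_pmf.expectation (N x) f = (\<Sum>a\<in>A. pmf (N x) a *\<^sub>R f a)"
      by (rule integral_measure_pmf[OF fA]) (use x in \<open>auto simp: A_def\<close>)
    then show "pmf M x *\<^sub>R (\<Sum>a\<in>A. pmf (N x) a *\<^sub>R f a) = pmf M x *\<^sub>R measure_pmf.expectation (N x) f"
      by simp
  qed
  also have "\<dots> = measure_pmf.expectation M (\<lambda>x. measure_pmf.expectation (N x) f)"
    by (rule integral_measure_pmf[symmetric]) (auto simp: S_def fM)
  finally show ?thesis .
qed

lemma gderiv_unique:
  assumes "GDERIV f x :> D" "GDERIV f x :> D'" shows "D = D'"
proof -
  have "(\<lambda>h. h \<bullet> D) = (\<lambda>h. h \<bullet> D')"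
    using has_derivative_unique assms unfolding gderiv_def by blast
  then have "(D - D') \<bullet> D = (D - D') \<bullet> D'" by metis
  then have "(D - D') \<bullet> (D - D') = 0" by (simp add: inner_diff_right)
  then show ?thesis by simp
qed

lemma gderiv_inner: "GDERIV (\<lambda>\<theta>. \<theta> \<bullet> e) x :> e"
  unfolding gderiv_def by (rule bounded_linear_imp_has_derivative) (rule bounded_linear_inner_left)

lemma line_deriv:
  fixes K :: "'a::real_inner \<Rightarrow> real"
  assumes "GDERIV K (a + t *\<^sub>R v) :> D"
  shows "((\<lambda>t. K (a + t *\<^sub>R v)) has_real_derivative (v \<bullet> D)) (at t)"
proof -
  have l: "((\<lambda>t. a + t *\<^sub>R v) has_derivative (\<lambda>s. s *\<^sub>R v)) (at t)"
    by (rule derivative_eq_intros refl)+ simp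
  have "((K \<circ> (\<lambda>t. a + t *\<^sub>R v)) has_derivative ((\<lambda>h. h \<bullet> D) \<circ> (\<lambda>s. s *\<^sub>R v))) (at t)"
    by (rule diff_chain_at[OF l]) (use assms in \<open>simp add: gderiv_def\<close>)
  moreover have "((\<lambda>h. h \<bullet> D) \<circ> (\<lambda>s. s *\<^sub>R v)) = (*) (v \<bullet> D)"
    by (auto simp: fun_eq_iff mult.commute)
  ultimately show ?thesis unfolding has_field_derivative_def by (simp add: o_def)
qed



definition MM :: "real \<Rightarrow> real \<Rightarrow> mdp" where
  "MM R g = \<lparr>St = UNIV, Ac = UNIV,
     Tr = (\<lambda>s a. if s = 0 \<and> a = 1 then return_pmf 2 else return_pmf 1),
     Rw = (\<lambda>s a. if s = 2 \<and> a = 1 then R else 0),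
     D0 = return_pmf 0, Term = 1, Disc = g\<rparr>"

lemma MM_simps[simp]: "St (MM R g) = UNIV" "Ac (MM R g) = UNIV"
  "Tr (MM R g) s a = (if s = 0 \<and> a = 1 then return_pmf 2 else return_pmf 1)"
  "Rw (MM R g) s a = (if s = 2 \<and> a = 1 then R else 0)"
  "D0 (MM R g) = return_pmf 0" "Term (MM R g) = 1" "Disc (MM R g) = g"
  by (simp_all add: MM_def)

lemma step_supp: "x \<in> set_pmf (sa_step (MM R g) \<pi> y) \<Longrightarrow> fst x = (if fst y = 0 \<and> snd y = 1 then 2 else 1)"
  by (auto simp: sa_step_def)

lemma sa_from_add: "sa_from M \<pi> d (m + n) = sa_from M \<pi> (sa_from M \<pi> d m) n"
  by (induction n) auto

lemma from1: "(\<forall>y\<in>set_pmf d. fst y = 1) \<Longrightarrow> x \<in> set_pmf (sa_from (MM R g) \<pi> d k) \<Longrightarrow> fst x = 1"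
proof (induction k arbitrary: x)
  case 0 then show ?case by auto
next
  case (Suc k)
  from Suc.prems(2) obtain y where y: "y \<in> set_pmf (sa_from (MM R g) \<pi> d k)"
    "x \<in> set_pmf (sa_step (MM R g) \<pi> y)" by auto
  have "fst y = 1" using Suc.IH[OF Suc.prems(1) y(1)] .
  then show ?case using step_supp[OF y(2)] by simp
qed

lemma fromSuc: assumes "\<forall>y\<in>set_pmf d. \<not> (fst y = 0 \<and> snd y = 1)"
  and "x \<in> set_pmf (sa_from (MM R g) \<pi> d (Suc k))" shows "fst x = 1"
proof -
  have "sa_from (MM R g) \<pi> d (Suc k) = sa_from (MM R g) \<pi> (sa_from (MM R g) \<pi> d 1) k"
    using sa_from_add[of _ _ d 1 k] by simp
  moreover have "\<forall>y\<in>set_pmf (sa_from (MM R g) \<pi> d 1). fst y = 1"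
  proof
    fix y assume "y \<in> set_pmf (sa_from (MM R g) \<pi> d 1)"
    then obtain z where z: "z \<in> set_pmf d" "y \<in> set_pmf (sa_step (MM R g) \<pi> z)" by auto
    show "fst y = 1" using step_supp[OF z(2)] assms(1) z(1) by auto
  qed
  ultimately show ?thesis using from1 assms(2) by metis
qed

lemma dist_supp: assumes "2 \<le> t" "x \<in> set_pmf (sa_dist (MM R g) \<pi> t)" shows "fst x = 1"
proof -
  obtain k where t: "t = Suc (1 + k)" using assms(1) by (metis add_Suc add_2_eq_Suc le_Suc_ex plus_1_eq_Suc)
  define d0 where "d0 = bind_pmf (D0 (MM R g)) (\<lambda>s. map_pmf (\<lambda>a. (s, a)) (\<pi> s))"
  have "sa_dist (MM R g) \<pi> t = sa_from (MM R g) \<pi> (sa_from (MM R g) \<pi> d0 1) (Suc k)"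
    unfolding sa_dist_def d0_def t using sa_from_add[of _ _ _ 1 "Suc k"] by simp
  moreover have "\<forall>y\<in>set_pmf (sa_from (MM R g) \<pi> d0 1). \<not> (fst y = 0 \<and> snd y = 1)"
  proof
    fix y assume "y \<in> set_pmf (sa_from (MM R g) \<pi> d0 1)"
    then obtain z where z: "y \<in> set_pmf (sa_step (MM R g) \<pi> z)" by auto
    show "\<not> (fst y = 0 \<and> snd y = 1)" using step_supp[OF z] by auto
  qed
  ultimately show ?thesis using fromSuc assms(2) by metis
qed

lemma in_class: assumes "0 < R" shows "MM R g \<in> mdp_class R g"
proof -
  have "episodic_mdp R g (MM R g)" unfolding episodic_mdp_def using assms by auto
  moreover have "summable (prob_nonterm (MM R g) \<pi>)" for \<pi>
  proof (rule summable_finite[of "{0,1}"])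
    fix t :: nat assume "t \<notin> {0,1}"
    then have "2 \<le> t" by auto
    then show "prob_nonterm (MM R g) \<pi> t = 0"
      unfolding prob_nonterm_def using dist_supp[of t]
      by (subst measure_pmf_zero_iff) (auto simp: disjnt_def)
  qed simp
  ultimately show ?thesis unfolding mdp_class_def by auto
qed



definition pol :: "'p::euclidean_space \<Rightarrow> 'p \<Rightarrow> 'p \<Rightarrow> nat \<Rightarrow> nat pmf" where
  "pol e1 e2 \<theta> s = (if s = 0 then bp (sig (\<theta> \<bullet> e1)) else if s = 2 then bp (sig (\<theta> \<bullet> e2)) else return_pmf 0)"

lemma sig01: "0 \<le> sig x" "sig x \<le> 1" using sig_pos[of x] sig_lt1[of x] by auto

lemma fin_pol: "finite (set_pmf (pol e1 e2 \<theta> s))"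
  unfolding pol_def using set_bp finite_subset by (auto intro: finite_subset[OF set_bp])

lemma fin_step: "finite (set_pmf (sa_step (MM R g) (pol e1 e2 \<theta>) x))"
  unfolding sa_step_def by (simp add: fin_pol)

lemma fin_from: "finite (set_pmf d) \<Longrightarrow> finite (set_pmf (sa_from (MM R g) (pol e1 e2 \<theta>) d k))"
  by (induction k) (auto simp: fin_step)

lemma fin_dist: "finite (set_pmf (sa_dist (MM R g) (pol e1 e2 \<theta>) t))"
  unfolding sa_dist_def by (rule fin_from) (simp add: fin_pol)

lemma pmf_pol: "pmf (pol e1 e2 \<theta> s) a =
  (if s = 0 then (if a = 1 then sig (\<theta> \<bullet> e1) else if a = 0 then 1 - sig (\<theta> \<bullet> e1) else 0)
   else if s = 2 then (if a = 1 then sig (\<theta> \<bullet> e2) else if a = 0 then 1 - sig (\<theta> \<bullet> e2) else 0)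
   else (if a = 0 then 1 else 0))"
  unfolding pol_def by (simp add: pmf_bp sig01 pmf_return)

lemma gd_sig: "GDERIV (\<lambda>\<theta>. sig (\<theta> \<bullet> e)) \<theta> :> (sig (\<theta> \<bullet> e) * (1 - sig (\<theta> \<bullet> e))) *\<^sub>R e"
  by (rule GDERIV_DERIV_compose[OF gderiv_inner sig_deriv])

lemma gd_lnsig: "GDERIV (\<lambda>\<theta>. ln (sig (\<theta> \<bullet> e))) \<theta> :> (1 - sig (\<theta> \<bullet> e)) *\<^sub>R e"
  by (rule GDERIV_DERIV_compose[OF gderiv_inner ln_sig_deriv])

lemma diff_sig: "(\<lambda>\<theta>. sig (\<theta> \<bullet> e)) differentiable (at \<theta>)"
  using gd_sig unfolding gderiv_def differentiable_def by blast

lemma diff_pol: "diff_policy (MM R g) (pol e1 e2)"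
  unfolding diff_policy_def is_policy_def
proof (intro conjI allI)
  fix s a \<theta>
  show "(\<lambda>\<theta>'. pmf (pol e1 e2 \<theta>' s) a) differentiable (at \<theta>)"
    unfolding pmf_pol
    by (cases "s = 0"; cases "s = 2"; cases "a = 1"; cases "a = 0";
        simp add: diff_sig differentiable_diff differentiable_const)
qed simp

lemma psi01: "psi (pol e1 e2) \<theta> 0 1 = (1 - sig (\<theta> \<bullet> e1)) *\<^sub>R e1"
proof -
  have eq: "(\<lambda>\<theta>'. ln (pmf (pol e1 e2 \<theta>' 0) 1)) = (\<lambda>\<theta>'. ln (sig (\<theta>' \<bullet> e1)))"
    by (simp add: pmf_pol)
  show ?thesis unfolding psi_def eq
    by (rule some_equality) (rule gd_lnsig, erule gderiv_unique[OF _ gd_lnsig])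
qed

lemma psi21: "psi (pol e1 e2) \<theta> 2 1 = (1 - sig (\<theta> \<bullet> e2)) *\<^sub>R e2"
proof -
  have eq: "(\<lambda>\<theta>'. ln (pmf (pol e1 e2 \<theta>' 2) 1)) = (\<lambda>\<theta>'. ln (sig (\<theta>' \<bullet> e2)))"
    by (simp add: pmf_pol)
  show ?thesis unfolding psi_def eq
    by (rule some_equality) (rule gd_lnsig, erule gderiv_unique[OF _ gd_lnsig])
qed

lemma int_return: "measure_pmf.expectation (return_pmf x) (f :: _ \<Rightarrow> real) = f x"
  by (subst integral_measure_pmf[of "{x}"]) auto

lemma Q_simple: assumes "s \<noteq> 0 \<or> a \<noteq> 1"
  shows "Qfun (MM R g) \<pi> s a = Rw (MM R g) s a"
proof -
  let ?f = "\<lambda>k. Disc (MM R g) ^ k * measure_pmf.expectation (sa_from (MM R g) \<pi> (return_pmf (s, a)) k)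
               (\<lambda>x. Rw (MM R g) (fst x) (snd x))"
  have "?f k = 0" if kn: "k \<notin> {0}" for k
  proof -
    obtain j where k: "k = Suc j" using kn by (cases k) auto
    have "measure_pmf.expectation (sa_from (MM R g) \<pi> (return_pmf (s, a)) (Suc j))
               (\<lambda>x. Rw (MM R g) (fst x) (snd x)) = 0"
    proof (rule integral_zero_supp)
      fix x assume "x \<in> set_pmf (sa_from (MM R g) \<pi> (return_pmf (s, a)) (Suc j))"
      then have "fst x = 1" by (rule fromSuc[rotated]) (use assms in auto)
      then show "Rw (MM R g) (fst x) (snd x) = 0" by simp
    qed
    then show ?thesis using k by simp
  qed
  then have "suminf ?f = (\<Sum>k\<in>{0}. ?f k)" by (intro suminf_finite) auto
  then show ?thesis unfolding Qfun_def by (simp add: int_return)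
qed



lemma int_return': "measure_pmf.expectation (return_pmf x) (f :: _ \<Rightarrow> 'b::{banach, second_countable_topology}) = f x"
  by (subst integral_measure_pmf[of "{x}"]) auto

lemma step_eq: "sa_step M \<pi> (s, a) = map_pmf (\<lambda>a'. (if s = 0 \<and> a = 1 then 2 else 1, a')) (\<pi> (if s = 0 \<and> a = 1 then 2 else 1))"
  if "M = MM R g" for M
  unfolding sa_step_def that by (simp add: bind_return_pmf)

lemma Q01: "Qfun (MM R g) (pol e1 e2 \<theta>) 0 1 = g * (sig (\<theta> \<bullet> e2) * R)"
proof -
  let ?M = "MM R g" and ?\<pi> = "pol e1 e2 \<theta>"
  let ?f = "\<lambda>k. Disc ?M ^ k * measure_pmf.expectation (sa_from ?M ?\<pi> (return_pmf (0, 1)) k)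
               (\<lambda>x. Rw ?M (fst x) (snd x))"
  have s1: "sa_from ?M ?\<pi> (return_pmf (0, 1)) 1 = map_pmf (\<lambda>a'. (2, a')) (bp (sig (\<theta> \<bullet> e2)))"
    by (simp add: bind_return_pmf step_eq[OF refl] pol_def)
  have "?f k = 0" if kn: "k \<notin> {0,1}" for k
  proof -
    obtain j where k: "k = Suc (1 + j)" using kn by (cases k; cases "k - 1") auto
    have e: "sa_from ?M ?\<pi> (return_pmf (0, 1)) k = sa_from ?M ?\<pi> (sa_from ?M ?\<pi> (return_pmf (0, 1)) 1) (Suc j)"
      unfolding k using sa_from_add[of ?M ?\<pi> _ 1 "Suc j"] by simp
    have "measure_pmf.expectation (sa_from ?M ?\<pi> (return_pmf (0, 1)) k)
               (\<lambda>x. Rw ?M (fst x) (snd x)) = 0"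
    proof (rule integral_zero_supp)
      fix x assume "x \<in> set_pmf (sa_from ?M ?\<pi> (return_pmf (0, 1)) k)"
      then have "fst x = 1" unfolding e by (rule fromSuc[rotated]) (auto dest: step_supp)
      then show "Rw ?M (fst x) (snd x) = 0" by simp
    qed
    then show ?thesis by simp
  qed
  then have "suminf ?f = (\<Sum>k\<in>{0,1}. ?f k)" by (intro suminf_finite) auto
  also have "\<dots> = g * (sig (\<theta> \<bullet> e2) * R)"
    using s1 by (simp add: int_return integral_bp sig01)
  finally show ?thesis unfolding Qfun_def .
qed

lemma Q1: "Qfun (MM R g) \<pi> 1 a = 0" by (simp add: Q_simple)
lemma Q00: "Qfun (MM R g) \<pi> 0 0 = 0" by (simp add: Q_simple)
lemma Q20: "Qfun (MM R g) \<pi> 2 0 = 0" by (simp add: Q_simple)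
lemma Q21: "Qfun (MM R g) \<pi> 2 1 = R" by (simp add: Q_simple)

lemmas Qs = Q01[simplified] Q1[simplified] Q00 Q20 Q21[simplified] psi01[simplified] psi21[simplified]

definition hh where "hh R g e1 e2 \<theta> = (\<lambda>x. Qfun (MM R g) (pol e1 e2 \<theta>) (fst x) (snd x) *\<^sub>R psi (pol e1 e2) \<theta> (fst x) (snd x))"

lemma dist0: "sa_dist (MM R g) (pol e1 e2 \<theta>) 0 = map_pmf (\<lambda>a. (0, a)) (bp (sig (\<theta> \<bullet> e1)))"
  by (simp add: sa_dist_def bind_return_pmf pol_def)

lemma pg0: "pg_term (MM R g) (pol e1 e2) \<theta> 0 =
   (sig (\<theta> \<bullet> e1) * (g * (sig (\<theta> \<bullet> e2) * R)) * (1 - sig (\<theta> \<bullet> e1))) *\<^sub>R e1"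
  unfolding pg_term_def dist0 integral_map_pmf
  by (simp add: integral_bp sig01 Qs)

lemma pg1: "pg_term (MM R g) (pol e1 e2) \<theta> 1 =
   (sig (\<theta> \<bullet> e1) * (sig (\<theta> \<bullet> e2) * R * (1 - sig (\<theta> \<bullet> e2)))) *\<^sub>R e2"
proof -
  have "sa_dist (MM R g) (pol e1 e2 \<theta>) 1 = bind_pmf (sa_dist (MM R g) (pol e1 e2 \<theta>) 0) (sa_step (MM R g) (pol e1 e2 \<theta>))"
    unfolding sa_dist_def by simp
  then have "pg_term (MM R g) (pol e1 e2) \<theta> 1 = measure_pmf.expectation (sa_dist (MM R g) (pol e1 e2 \<theta>) 0)
      (\<lambda>z. measure_pmf.expectation (sa_step (MM R g) (pol e1 e2 \<theta>) z) (hh R g e1 e2 \<theta>))"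
    unfolding pg_term_def hh_def[symmetric]
    by (simp add: integral_bind_fin fin_dist fin_step)
  also have "\<dots> = (sig (\<theta> \<bullet> e1) * (sig (\<theta> \<bullet> e2) * R * (1 - sig (\<theta> \<bullet> e2)))) *\<^sub>R e2"
    unfolding dist0 integral_map_pmf
    by (simp add: integral_bp sig01 step_eq[OF refl] pol_def int_return' hh_def Qs)
  finally show ?thesis .
qed

lemma pgn: "2 \<le> t \<Longrightarrow> pg_term (MM R g) (pol e1 e2) \<theta> t = 0"
  unfolding pg_term_def
  by (rule integral_zero_supp) (auto dest: dist_supp simp: Qs)

lemma pg_def_all: "pg_defined (MM R g) (pol e1 e2) \<theta>"
  unfolding pg_defined_def
  by (auto intro!: integrable_measure_pmf_finite fin_dist summable_finite[of "{0,1}"] pgn)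

lemma pg_formula: "pg (MM R g) (pol e1 e2) \<theta> =
   (sig (\<theta> \<bullet> e1) * (g * (sig (\<theta> \<bullet> e2) * R)) * (1 - sig (\<theta> \<bullet> e1))) *\<^sub>R e1
   + (sig (\<theta> \<bullet> e1) * (sig (\<theta> \<bullet> e2) * R * (1 - sig (\<theta> \<bullet> e2)))) *\<^sub>R e2"
proof -
  have "pg (MM R g) (pol e1 e2) \<theta> = (\<Sum>t\<in>{0,1}. pg_term (MM R g) (pol e1 e2) \<theta> t)"
    unfolding pg_def by (rule suminf_finite) (auto intro: pgn)
  then show ?thesis by (simp add: pg0 pg1[simplified])
qed



theorem theorem4p2:
  fixes Rmax \<gamma> :: real
  assumes "0 < Rmax" and "0 \<le> \<gamma>" and "\<gamma> < 1"
    and "DIM('p::euclidean_space) \<ge> 2"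
  shows "\<not> (\<exists>J :: mdp \<Rightarrow> ('p \<Rightarrow> nat \<Rightarrow> nat pmf) \<Rightarrow> 'p \<Rightarrow> real.
            \<forall>M \<in> mdp_class Rmax \<gamma>. \<forall>pol. diff_policy M pol \<longrightarrow>
              (\<forall>\<theta>. pg_defined M pol \<theta> \<longrightarrow> GDERIV (J M pol) \<theta> :> pg M pol \<theta>))"
proof
  assume "\<exists>J :: mdp \<Rightarrow> ('p \<Rightarrow> nat \<Rightarrow> nat pmf) \<Rightarrow> 'p \<Rightarrow> real.
            \<forall>M \<in> mdp_class Rmax \<gamma>. \<forall>pol. diff_policy M pol \<longrightarrow>
              (\<forall>\<theta>. pg_defined M pol \<theta> \<longrightarrow> GDERIV (J M pol) \<theta> :> pg M pol \<theta>)"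
  then obtain J :: "mdp \<Rightarrow> ('p \<Rightarrow> nat \<Rightarrow> nat pmf) \<Rightarrow> 'p \<Rightarrow> real" where
    J: "\<forall>M \<in> mdp_class Rmax \<gamma>. \<forall>pol. diff_policy M pol \<longrightarrow>
              (\<forall>\<theta>. pg_defined M pol \<theta> \<longrightarrow> GDERIV (J M pol) \<theta> :> pg M pol \<theta>)" by blast
  obtain e1 :: 'p where e1: "e1 \<in> Basis" using nonempty_Basis by blast
  have "Basis - {e1} \<noteq> {}"
  proof
    assume "Basis - {e1} = {}"
    then have "Basis = {e1}" using e1 by blast
    then have "card (Basis :: 'p set) = 1" using card_1_singleton_iff by (metis One_nat_def)
    then show False using assms(4) by linarith
  qed
  then obtain e2 :: 'p where e2: "e2 \<in> Basis" "e2 \<noteq> e1" by blast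
  have i11: "e1 \<bullet> e1 = 1" "e2 \<bullet> e2 = 1" using e1 e2 by simp_all
  have i12: "e1 \<bullet> e2 = 0" "e2 \<bullet> e1 = 0" using e1 e2 by (simp_all add: inner_Basis)
  define M where "M = MM Rmax \<gamma>"
  define P where "P = pol e1 e2"
  define F where "F = J M P"
  have gF: "GDERIV F \<theta> :> pg M P \<theta>" for \<theta>
    using J in_class[OF assms(1), of \<gamma>] diff_pol[of Rmax \<gamma> e1 e2] pg_def_all[of Rmax \<gamma> e1 e2]
    unfolding F_def M_def P_def by blast
  define \<Phi> where "\<Phi> \<theta> = Rmax * (sig (\<theta> \<bullet> e1) * sig (\<theta> \<bullet> e2))" for \<theta>
  define G where "G \<theta> = ((\<gamma> - 1) * Rmax * sig (\<theta> \<bullet> e1) * (1 - sig (\<theta> \<bullet> e1)) * sig (\<theta> \<bullet> e2)) *\<^sub>R e1" for \<theta>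
  define K where "K \<theta> = F \<theta> - \<Phi> \<theta>" for \<theta>
  have gPhi: "GDERIV \<Phi> \<theta> :> Rmax *\<^sub>R (sig (\<theta> \<bullet> e1) *\<^sub>R ((sig (\<theta> \<bullet> e2) * (1 - sig (\<theta> \<bullet> e2))) *\<^sub>R e2)
       + sig (\<theta> \<bullet> e2) *\<^sub>R ((sig (\<theta> \<bullet> e1) * (1 - sig (\<theta> \<bullet> e1))) *\<^sub>R e1))" for \<theta>
    unfolding \<Phi>_def
    using GDERIV_mult[OF GDERIV_const[of Rmax \<theta>] GDERIV_mult[OF gd_sig[of e1 \<theta>] gd_sig[of e2 \<theta>]]]
    by simp
  have gK: "GDERIV K \<theta> :> G \<theta>" for \<theta>
  proof -
    have "GDERIV K \<theta> :> pg M P \<theta> - Rmax *\<^sub>R (sig (\<theta> \<bullet> e1) *\<^sub>R ((sig (\<theta> \<bullet> e2) * (1 - sig (\<theta> \<bullet> e2))) *\<^sub>R e2)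
       + sig (\<theta> \<bullet> e2) *\<^sub>R ((sig (\<theta> \<bullet> e1) * (1 - sig (\<theta> \<bullet> e1))) *\<^sub>R e1))"
      unfolding K_def by (rule GDERIV_diff[OF gF gPhi])
    moreover have "pg M P \<theta> - Rmax *\<^sub>R (sig (\<theta> \<bullet> e1) *\<^sub>R ((sig (\<theta> \<bullet> e2) * (1 - sig (\<theta> \<bullet> e2))) *\<^sub>R e2)
       + sig (\<theta> \<bullet> e2) *\<^sub>R ((sig (\<theta> \<bullet> e1) * (1 - sig (\<theta> \<bullet> e1))) *\<^sub>R e1)) = G \<theta>"
      unfolding M_def P_def pg_formula G_def
      by (simp add: algebra_simps scaleR_add_right)
    ultimately show ?thesis by simp
  qed
  have const: "K (a + 1 *\<^sub>R e2) = K (a + 0 *\<^sub>R e2)" for a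
  proof (rule DERIV_isconst_all[where f = "\<lambda>t. K (a + t *\<^sub>R e2)"], intro allI)
    fix t
    have "((\<lambda>t. K (a + t *\<^sub>R e2)) has_real_derivative (e2 \<bullet> G (a + t *\<^sub>R e2))) (at t)"
      by (rule line_deriv[OF gK])
    moreover have "e2 \<bullet> G (a + t *\<^sub>R e2) = 0" unfolding G_def using i12 by simp
    ultimately show "((\<lambda>t. K (a + t *\<^sub>R e2)) has_real_derivative 0) (at t)" by simp
  qed
  have same: "(\<lambda>t. K (e2 + t *\<^sub>R e1)) = (\<lambda>t. K (0 + t *\<^sub>R e1))"
  proof
    fix t
    show "K (e2 + t *\<^sub>R e1) = K (0 + t *\<^sub>R e1)"
      using const[of "t *\<^sub>R e1"] by (simp add: add.commute)
  qed
  have d0: "((\<lambda>t. K (0 + t *\<^sub>R e1)) has_real_derivative (e1 \<bullet> G (0 + 0 *\<^sub>R e1))) (at 0)"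
    by (rule line_deriv[OF gK])
  have d1: "((\<lambda>t. K (e2 + t *\<^sub>R e1)) has_real_derivative (e1 \<bullet> G (e2 + 0 *\<^sub>R e1))) (at 0)"
    by (rule line_deriv[OF gK])
  have "e1 \<bullet> G (e2 + 0 *\<^sub>R e1) = e1 \<bullet> G (0 + 0 *\<^sub>R e1)"
    using DERIV_unique[OF d1[unfolded same] d0] .
  then have "(\<gamma> - 1) * Rmax * sig 0 * (1 - sig 0) * sig 1 = (\<gamma> - 1) * Rmax * sig 0 * (1 - sig 0) * sig 0"
    unfolding G_def using i11 i12 by simp
  moreover have "(\<gamma> - 1) * Rmax * sig 0 * (1 - sig 0) \<noteq> 0"
    using assms(1,3) by (simp add: sig0)
  ultimately have "sig 1 = sig 0" by simp
  then show False using sig0 sig1 by simp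
qed


end
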